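(* Let $\rho$ be a simplicial representation of a right-angled Coxeter system $(C,S)$ with Vinberg domain $\Omega_{\mathrm{Vin}}$. If $W_1,\dots,W_n$ is an efficient itinerary of walls in $\Omega_{\mathrm{Vin}}$ with first wall $W_1$ and last wall $W_n$, then $\overline{W_1}\cap\overline{W_n}=\bigcap_{i=1}^n\overline{W_i}$.
   Context: $S=\{s_1,\dots,s_n\}$, $V=\mathbb{R}^{|S|}$. Simplicial representation: $\rho(s_i)=\mathrm{id}-v_i\otimes\alpha_i$, $\alpha_i=e^i$, $v_i=\sum_kA_{ki}e_k$, $A$ a Cartan matrix ($A_{ii}=2$; $A_{ij}=0$ if $s_i,s_j$ commute; $A_{ij}<0$, $A_{ij}A_{ji}\ge4$ otherwise). $\Omega_{\mathrm{Vin}}$ is the projectivization of the interior of $\bigcup_{\gamma}\rho(\gamma)\{x:\alpha_i(x)\le0\ \forall i\}$. Walls in $\Omega_{\mathrm{Vin}}$: fixed sets in $\Omega_{\mathrm{Vin}}$ of $\rho(r)$, $r$ a reflection (conjugate of a generator); closures in $\mathbb{P}(V)$. Via the correspondence with Davis-complex walls (the wall of $r$ is the set of edges $\{g,gs\}$ of $\mathrm{Cay}(C,S)$ with $gsg^{-1}=r$), an itinerary is a sequence of walls with edges $e_i\in W_i$ forming a geodesic edge path in $\mathrm{Cay}(C,S)$; it is efficient if every wall other than the first and last is disjoint (as a Davis-complex hyperplane) from the first and the last. *)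

theory Defs
  imports "HOL-Analysis.Analysis"
begin

(* Generators S are indexed by a finite type 'n; V = real^'n.
   E s t : s and t commute (the defining graph of the right-angled Coxeter system). *)

definition racg_graph :: "('n \<Rightarrow> 'n \<Rightarrow> bool) \<Rightarrow> bool" where
  "racg_graph E \<longleftrightarrow> (\<forall>s t. E s t \<longrightarrow> E t s) \<and> (\<forall>s. \<not> E s s)"

inductive cox_step :: "('n \<Rightarrow> 'n \<Rightarrow> bool) \<Rightarrow> 'n list \<Rightarrow> 'n list \<Rightarrow> bool"
  for E where
  cancel: "cox_step E (u @ [s, s] @ v) (u @ v)"
| swap: "E s t \<Longrightarrow> cox_step E (u @ [s, t] @ v) (u @ [t, s] @ v)"

(* equality in the right-angled Coxeter group C, on words *)
definition ceq :: "('n \<Rightarrow> 'n \<Rightarrow> bool) \<Rightarrow> 'n list \<Rightarrow> 'n list \<Rightarrow> bool" where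
  "ceq E u v \<longleftrightarrow> (u, v) \<in> ({(x, y). cox_step E x y} \<union> {(x, y). cox_step E y x})\<^sup>*"

definition cox_len :: "('n \<Rightarrow> 'n \<Rightarrow> bool) \<Rightarrow> 'n list \<Rightarrow> nat" where
  "cox_len E w = (LEAST k. \<exists>u. length u = k \<and> ceq E u w)"

definition is_reflection :: "('n \<Rightarrow> 'n \<Rightarrow> bool) \<Rightarrow> 'n list \<Rightarrow> bool" where
  "is_reflection E r \<longleftrightarrow> (\<exists>g s. ceq E r (g @ [s] @ rev g))"

(* the edge {g, g s} of Cay(C,S) lies in the Davis-complex wall of the reflection r *)
definition edge_in_wall :: "('n \<Rightarrow> 'n \<Rightarrow> bool) \<Rightarrow> 'n list \<Rightarrow> 'n \<Rightarrow> 'n list \<Rightarrow> bool" where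
  "edge_in_wall E g s r \<longleftrightarrow> ceq E (g @ [s] @ rev g) r"

(* Davis-complex hyperplanes of r and r' intersect (the Davis complex of a right-angled
   Coxeter group is a CAT(0) cube complex; two hyperplanes meet iff they cross in a square
   with vertices g, gs, gt, gst, s \<noteq> t commuting) *)
definition walls_cross :: "('n \<Rightarrow> 'n \<Rightarrow> bool) \<Rightarrow> 'n list \<Rightarrow> 'n list \<Rightarrow> bool" where
  "walls_cross E r r' \<longleftrightarrow> (\<exists>g s t. s \<noteq> t \<and> E s t \<and> edge_in_wall E g s r \<and> edge_in_wall E g t r')"

definition walls_disjoint :: "('n \<Rightarrow> 'n \<Rightarrow> bool) \<Rightarrow> 'n list \<Rightarrow> 'n list \<Rightarrow> bool" where
  "walls_disjoint E r r' \<longleftrightarrow> \<not> ceq E r r' \<and> \<not> walls_cross E r r'"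

(* itinerary: reflections rs = [r_1,...,r_m] and vertices gs = [g_0,...,g_m] of Cay(C,S)
   with g_i = g_{i-1} s_i, the edge {g_{i-1}, g_i} in the wall of r_i, geodesic path *)
definition itinerary :: "('n \<Rightarrow> 'n \<Rightarrow> bool) \<Rightarrow> 'n list list \<Rightarrow> bool" where
  "itinerary E rs \<longleftrightarrow> rs \<noteq> [] \<and> (\<forall>r\<in>set rs. is_reflection E r) \<and>
     (\<exists>gs ss. length gs = Suc (length rs) \<and> length ss = length rs \<and>
        (\<forall>i < length rs. ceq E (gs ! Suc i) (gs ! i @ [ss ! i]) \<and>
                         edge_in_wall E (gs ! i) (ss ! i) (rs ! i)) \<and>
        cox_len E (rev (gs ! 0) @ gs ! length rs) = length rs)"

definition efficient_itinerary :: "('n \<Rightarrow> 'n \<Rightarrow> bool) \<Rightarrow> 'n list list \<Rightarrow> bool" where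
  "efficient_itinerary E rs \<longleftrightarrow> itinerary E rs \<and>
     (\<forall>i. 0 < i \<and> i < length rs - 1 \<longrightarrow>
        walls_disjoint E (rs ! i) (hd rs) \<and> walls_disjoint E (rs ! i) (last rs))"

definition cartan_racg :: "('n \<Rightarrow> 'n \<Rightarrow> bool) \<Rightarrow> real^'n^'n \<Rightarrow> bool" where
  "cartan_racg E A \<longleftrightarrow> (\<forall>i. A$i$i = 2) \<and>
     (\<forall>i j. i \<noteq> j \<longrightarrow> (if E i j then A$i$j = 0 else A$i$j < 0 \<and> A$i$j * A$j$i \<ge> 4))"

(* rho(s_i) = id - v_i \<otimes> alpha_i, alpha_i = e^i, v_i = sum_k A_ki e_k *)
definition rho_gen :: "real^'n^'n \<Rightarrow> 'n \<Rightarrow> real^'n \<Rightarrow> real^'n" where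
  "rho_gen A i x = x - (x$i) *\<^sub>R (\<chi> k. A$k$i)"

fun rho_word :: "real^'n^'n \<Rightarrow> 'n list \<Rightarrow> real^'n \<Rightarrow> real^'n" where
  "rho_word A [] = id"
| "rho_word A (s # w) = rho_gen A s \<circ> rho_word A w"

(* Subsets of P(V) are represented by their cones in V - {0}. *)
definition fund_chamber :: "(real^'n) set" where
  "fund_chamber = {x. \<forall>i. x$i \<le> 0}"

definition vinberg_cone :: "real^'n^'n \<Rightarrow> (real^'n) set" where
  "vinberg_cone A = interior (\<Union>w. rho_word A w ` fund_chamber) - {0}"

(* cone over the wall of rho(r): projective fixed points of rho(r) in Omega_Vin *)
definition omega_wall :: "real^'n^'n \<Rightarrow> 'n list \<Rightarrow> (real^'n) set" where
  "omega_wall A r = {x \<in> vinberg_cone A. \<exists>c::real. rho_word A r x = c *\<^sub>R x}"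

(* cone over the closure in P(V) of a set given by its cone *)
definition proj_closure :: "(real^'n) set \<Rightarrow> (real^'n) set" where
  "proj_closure X = closure X - {0}"

end

theory Submission
  imports Defs
begin


lemma cox_step_ctxt: "cox_step E x y \<Longrightarrow> cox_step E (p @ x @ q) (p @ y @ q)"
proof (induction rule: cox_step.induct)
  case (cancel u s v)
  have "cox_step E ((p @ u) @ [s, s] @ (v @ q)) ((p @ u) @ (v @ q))" by (rule cox_step.cancel)
  then show ?case by simp
next
  case (swap s t u v)
  have "cox_step E ((p @ u) @ [s, t] @ (v @ q)) ((p @ u) @ [t, s] @ (v @ q))" using swap.hyps by (rule cox_step.swap)
  then show ?case by simp
qed

lemma ceq_refl[simp]: "ceq E u u"
  unfolding ceq_def by simp

lemma ceq_trans[trans]: "ceq E u v \<Longrightarrow> ceq E v w \<Longrightarrow> ceq E u w"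
  unfolding ceq_def by (rule rtrancl_trans)

lemma ceq_sym: "ceq E u v \<Longrightarrow> ceq E v u"
  unfolding ceq_def
proof (induction rule: rtrancl_induct)
  case base then show ?case by simp
next
  case (step y z)
  then have "(z, y) \<in> ({(x, y). cox_step E x y} \<union> {(x, y). cox_step E y x})" by auto
  then show ?case using step(3) by (rule converse_rtrancl_into_rtrancl)
qed

lemma ceq_step: "cox_step E u v \<Longrightarrow> ceq E u v"
  unfolding ceq_def by auto

lemma ceq_ctxt: "ceq E u v \<Longrightarrow> ceq E (p @ u @ q) (p @ v @ q)"
  unfolding ceq_def
proof (induction rule: rtrancl_induct)
  case base then show ?case by simp
next
  case (step y z)
  then have "(p @ y @ q, p @ z @ q) \<in> ({(x, y). cox_step E x y} \<union> {(x, y). cox_step E y x})"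
    using step(2) cox_step_ctxt[of E y z p q] cox_step_ctxt[of E z y p q] by auto
  then show ?case by (rule rtrancl_into_rtrancl[OF step(3)])
qed

lemma ceq_app: "ceq E u u' \<Longrightarrow> ceq E v v' \<Longrightarrow> ceq E (u @ v) (u' @ v')"
proof -
  assume a: "ceq E u u'" "ceq E v v'"
  have "ceq E ([] @ u @ v) ([] @ u' @ v)" by (rule ceq_ctxt[OF a(1)])
  moreover have "ceq E (u' @ v @ []) (u' @ v' @ [])" by (rule ceq_ctxt[OF a(2)])
  ultimately show ?thesis by (auto intro: ceq_trans)
qed

lemma ceq_cancel: "ceq E (u @ [s, s] @ v) (u @ v)"
  by (rule ceq_step) (rule cox_step.cancel)

lemma ceq_ss: "ceq E (u @ [s, s]) u"
  using ceq_cancel[of E u s "[]"] by simp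

lemma ceq_rev_cancel: "ceq E (rev w @ w) []"
proof (induction w)
  case Nil then show ?case by simp
next
  case (Cons a w)
  have "ceq E (rev w @ [a, a] @ w) (rev w @ w)" by (rule ceq_cancel)
  then show ?case using Cons by (auto intro: ceq_trans)
qed

lemma ceq_cancel_rev: "ceq E (w @ rev w) []"
  using ceq_rev_cancel[of E "rev w"] by simp

lemma cox_step_length: "cox_step E u v \<Longrightarrow> even (length u) = even (length v)"
  by (induction rule: cox_step.induct) auto

lemma ceq_parity: "ceq E u v \<Longrightarrow> even (length u) = even (length v)"
  unfolding ceq_def
proof (induction rule: rtrancl_induct)
  case base then show ?case by simp
next
  case (step y z)
  then show ?case using cox_step_length by blast
qed

lemma cox_len_ex: "\<exists>u. length u = cox_len E w \<and> ceq E u w"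
  unfolding cox_len_def by (rule LeastI[of _ "length w"]) auto

lemma cox_len_le: "ceq E u w \<Longrightarrow> cox_len E w \<le> length u"
  unfolding cox_len_def by (rule Least_le) auto

lemma cox_len_le_length: "cox_len E w \<le> length w"
  by (rule cox_len_le) simp

lemma cox_len_ceq: "ceq E u w \<Longrightarrow> cox_len E u = cox_len E w"
proof -
  assume a: "ceq E u w"
  obtain x where x: "length x = cox_len E u" "ceq E x u" using cox_len_ex by blast
  obtain y where y: "length y = cox_len E w" "ceq E y w" using cox_len_ex by blast
  have "cox_len E w \<le> length x" using x a by (intro cox_len_le) (auto intro: ceq_trans)
  moreover have "cox_len E u \<le> length y" using y a by (intro cox_len_le) (auto intro: ceq_trans ceq_sym)
  ultimately show ?thesis using x y by simp
qed

lemma cox_len_parity: "even (cox_len E w) = even (length w)"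
  using cox_len_ex[of E w] ceq_parity by metis

lemma cox_len_append: "cox_len E (u @ v) \<le> cox_len E u + cox_len E v"
proof -
  obtain x where x: "length x = cox_len E u" "ceq E x u" using cox_len_ex by blast
  obtain y where y: "length y = cox_len E v" "ceq E y v" using cox_len_ex by blast
  have "ceq E (x @ y) (u @ v)" using x y ceq_app by blast
  then show ?thesis using x y cox_len_le by fastforce
qed

lemma cox_len_append_len: "cox_len E (u @ v) \<le> cox_len E u + length v"
  using cox_len_append[of E u v] cox_len_le_length[of E v] by linarith

lemma cox_len_snoc: "cox_len E (w @ [s]) = Suc (cox_len E w) \<or> cox_len E w = Suc (cox_len E (w @ [s]))"
proof -
  have a: "cox_len E (w @ [s]) \<le> Suc (cox_len E w)" using cox_len_append_len[of E w "[s]"] by simp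
  have "ceq E (w @ [s, s]) w" by (rule ceq_ss)
  then have "cox_len E w = cox_len E ((w @ [s]) @ [s])" using cox_len_ceq by (metis append_Cons append_Nil append_assoc)
  then have b: "cox_len E w \<le> Suc (cox_len E (w @ [s]))" using cox_len_append_len[of E "w @ [s]" "[s]"] by simp
  have "even (cox_len E (w @ [s])) \<noteq> even (cox_len E w)" using cox_len_parity[of E w] cox_len_parity[of E "w@[s]"] by simp
  then show ?thesis using a b by (metis le_SucE le_antisym)
qed

lemma cox_len_zero: "cox_len E w = 0 \<Longrightarrow> ceq E [] w"
  using cox_len_ex[of E w] by auto



locale rc =
  fixes E :: "'n::finite \<Rightarrow> 'n \<Rightarrow> bool" and A :: "real^'n^'n"
  assumes graph: "racg_graph E" and cart: "cartan_racg E A"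
begin

lemma Esym: "E s t \<Longrightarrow> E t s" using graph unfolding racg_graph_def by blast
lemma Eirr: "\<not> E s s" using graph unfolding racg_graph_def by blast
lemma Add[simp]: "A$i$i = 2" using cart unfolding cartan_racg_def by blast
lemma Acomm: "E i j \<Longrightarrow> A$i$j = 0"
  using cart Eirr unfolding cartan_racg_def by metis
lemma Aneg: "i \<noteq> j \<Longrightarrow> \<not> E i j \<Longrightarrow> A$i$j < 0"
  using cart unfolding cartan_racg_def by metis
lemma Aprod: "i \<noteq> j \<Longrightarrow> \<not> E i j \<Longrightarrow> A$i$j * A$j$i \<ge> 4"
  using cart unfolding cartan_racg_def by metis
lemma Anonpos: "i \<noteq> j \<Longrightarrow> A$i$j \<le> 0"
  using Acomm Aneg by (cases "E i j") force+

lemma cox_step_rev: "cox_step E u v \<Longrightarrow> cox_step E (rev u) (rev v)"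
proof (induction rule: cox_step.induct)
  case (cancel u s v)
  have "cox_step E (rev v @ [s, s] @ rev u) (rev v @ rev u)" by (rule cox_step.cancel)
  then show ?case by simp
next
  case (swap s t u v)
  have "cox_step E (rev v @ [t, s] @ rev u) (rev v @ [s, t] @ rev u)"
    using Esym[OF swap.hyps] by (rule cox_step.swap)
  then show ?case by simp
qed

lemma ceq_rev: "ceq E u v \<Longrightarrow> ceq E (rev u) (rev v)"
  unfolding ceq_def
proof (induction rule: rtrancl_induct)
  case base then show ?case by simp
next
  case (step y z)
  then have "(rev y, rev z) \<in> ({(x, y). cox_step E x y} \<union> {(x, y). cox_step E y x})"
    using step(2) cox_step_rev[of y z] cox_step_rev[of z y] by auto
  then show ?case by (rule rtrancl_into_rtrancl[OF step(3)])
qed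

lemma cox_len_rev_le: "cox_len E (rev w) \<le> cox_len E w"
proof -
  obtain x where x: "length x = cox_len E w" "ceq E x w" using cox_len_ex by blast
  have "ceq E (rev x) (rev w)" using ceq_rev[OF x(2)] .
  then show ?thesis using cox_len_le x(1) by fastforce
qed

lemma cox_len_rev: "cox_len E (rev w) = cox_len E w"
  using cox_len_rev_le[of w] cox_len_rev_le[of "rev w"] by simp

subsection \<open>The representation\<close>

lemma rho_word_append: "rho_word A (u @ v) = rho_word A u \<circ> rho_word A v"
  by (induction u) auto

lemma rho_gen_nth: "rho_gen A i x $ k = x$k - x$i * A$k$i"
  unfolding rho_gen_def by simp

lemma rho_gen_invol[simp]: "rho_gen A i (rho_gen A i x) = x"
  by (simp add: vec_eq_iff rho_gen_nth algebra_simps)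

lemma rho_gen_comm: "E i j \<Longrightarrow> rho_gen A i (rho_gen A j x) = rho_gen A j (rho_gen A i x)"
  using Acomm[of i j] Acomm[of j i] Esym[of i j]
  by (simp add: vec_eq_iff rho_gen_nth algebra_simps)

lemma rho_step: "cox_step E u v \<Longrightarrow> rho_word A u = rho_word A v"
proof (induction rule: cox_step.induct)
  case (cancel u s v)
  then show ?case by (auto simp: rho_word_append fun_eq_iff)
next
  case (swap s t u v)
  then show ?case by (auto simp: rho_word_append fun_eq_iff rho_gen_comm[OF swap.hyps])
qed

lemma rho_ceq: "ceq E u v \<Longrightarrow> rho_word A u = rho_word A v"
  unfolding ceq_def
proof (induction rule: rtrancl_induct)
  case base then show ?case by simp
next
  case (step y z)
  then show ?case using rho_step by auto
qed

lemma rho_rev1[simp]: "rho_word A (rev w) (rho_word A w x) = x"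
  using rho_ceq[OF ceq_rev_cancel[of E w]] by (simp add: rho_word_append fun_eq_iff)

lemma rho_rev2[simp]: "rho_word A w (rho_word A (rev w) x) = x"
  using rho_rev1[of "rev w"] by simp

lemma linear_rho_gen: "linear (rho_gen A i)"
  unfolding rho_gen_def by (intro linearI) (auto simp: algebra_simps)

lemma linear_rho: "linear (rho_word A w)"
proof (induction w)
  case Nil then show ?case using linear_id by (simp add: id_def)
next
  case (Cons a w)
  have "linear (rho_gen A a \<circ> rho_word A w)" by (rule linear_compose[OF Cons linear_rho_gen])
  then show ?case by (simp add: o_def)
qed

lemma bij_rho: "bij (rho_word A w)"
  by (rule bij_betw_byWitness[of _ "rho_word A (rev w)"]) auto

subsection \<open>Functionals\<close>

definition fmove :: "real^'n^'n \<Rightarrow> 'n \<Rightarrow> real^'n \<Rightarrow> real^'n" where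
  "fmove B i f = f - (f \<bullet> (\<chi> k. B$k$i)) *\<^sub>R axis i 1"

fun fw :: "real^'n^'n \<Rightarrow> 'n list \<Rightarrow> real^'n \<Rightarrow> real^'n" where
  "fw B [] f = f"
| "fw B (a # u) f = fw B u (fmove B a f)"

lemma inner_axis1[simp]: "f \<bullet> axis i (1::real) = f $ i" "axis i (1::real) \<bullet> f = f $ i"
  by (simp_all add: inner_axis inner_axis')

lemma fmove_inner: "fmove A i f \<bullet> x = f \<bullet> rho_gen A i x"
  unfolding fmove_def rho_gen_def by (simp add: inner_diff_left inner_diff_right)

lemma fw_inner: "fw A u f \<bullet> x = f \<bullet> rho_word A u x"
  by (induction u arbitrary: f) (auto simp: fmove_inner)

lemma fw_append: "fw A (u @ v) f = fw A v (fw A u f)"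
  by (induction u arbitrary: f) auto

lemma fmove_nth: "fmove A i f $ k = (if k = i then f$k - (f \<bullet> (\<chi> k. A$k$i)) else f$k)"
  unfolding fmove_def by (auto simp: axis_def)

lemma fmove_linear: "fmove A i (c *\<^sub>R f + d *\<^sub>R g) = c *\<^sub>R fmove A i f + d *\<^sub>R fmove A i g"
  unfolding fmove_def by (simp add: inner_add_left algebra_simps)

lemma fw_linear: "fw A u (c *\<^sub>R f + d *\<^sub>R g) = c *\<^sub>R fw A u f + d *\<^sub>R fw A u g"
  by (induction u arbitrary: f g) (auto simp: fmove_linear)

lemma fw_scale: "fw A u (c *\<^sub>R f) = c *\<^sub>R fw A u f"
  using fw_linear[of u c f 0 0] by simp

lemma vec_eq_inner: "(\<And>x. f \<bullet> x = g \<bullet> (x::real^'n)) \<Longrightarrow> f = g"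
  by (metis inner_axis1(1) vec_eq_iff)

lemma fw_ceq: "ceq E u v \<Longrightarrow> fw A u f = fw A v f"
  by (rule vec_eq_inner) (simp add: fw_inner rho_ceq)

lemma fmove_invol[simp]: "fmove A i (fmove A i f) = f"
  by (rule vec_eq_inner) (simp add: fmove_inner)

lemma fmove_axis_self[simp]: "fmove A i (axis i 1) = - axis i 1"
proof -
  have "fmove A i (axis i 1) $ k = (- axis i 1) $ k" for k
    by (cases "k = i") (simp_all add: fmove_nth, simp add: axis_def)
  then show ?thesis by (simp add: vec_eq_iff)
qed

end


lemma not_successively_split:
  "\<not> successively (\<noteq>) a \<Longrightarrow> \<exists>p c q. a = p @ [c, c] @ q"
proof (induction a)
  case Nil then show ?case by simp
next
  case (Cons x xs)
  show ?case
  proof (cases xs)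
    case Nil then show ?thesis using Cons by simp
  next
    case (Cons y ys)
    show ?thesis
    proof (cases "x = y")
      case True then show ?thesis using Cons by (rule_tac x="[]" in exI) auto
    next
      case False
      then have "\<not> successively (\<noteq>) xs" using Cons Cons.prems by simp
      then obtain p c q where "xs = p @ [c, c] @ q" using Cons.IH by blast
      then show ?thesis by (rule_tac x="x # p" in exI) auto
    qed
  qed
qed

context rc
begin

definition pos :: "real^'n \<Rightarrow> bool" where "pos f \<longleftrightarrow> (\<forall>i. 0 \<le> f$i)"
definition neg :: "real^'n \<Rightarrow> bool" where "neg f \<longleftrightarrow> (\<forall>i. f$i \<le> 0)"
definition root :: "'n list \<Rightarrow> 'n \<Rightarrow> real^'n" where "root w s = fw A (rev w) (axis s 1)"

lemma supp2:
  assumes "\<forall>k. k \<noteq> x \<longrightarrow> k \<noteq> y \<longrightarrow> f$k = 0" "x \<noteq> y"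
  shows "f = f$x *\<^sub>R axis x 1 + f$y *\<^sub>R axis y (1::real)"
  using assms by (auto simp: vec_eq_iff axis_def)

lemma supp2_inner:
  assumes "\<forall>k. k \<noteq> x \<longrightarrow> k \<noteq> y \<longrightarrow> f$k = 0" "x \<noteq> y"
  shows "f \<bullet> v = f$x * v$x + f$y * v$y"
  by (subst supp2[OF assms]) (simp add: inner_add_left)

lemma rank2:
  assumes xy: "x \<noteq> y" "\<not> E x y"
  shows "set b \<subseteq> {x, y} \<Longrightarrow> successively (\<noteq>) b \<Longrightarrow> (b \<noteq> [] \<longrightarrow> hd b = y) \<Longrightarrow>
    (\<forall>k. k \<noteq> x \<longrightarrow> k \<noteq> y \<longrightarrow> fw A b (axis x 1) $ k = 0) \<and> fw A b (axis x 1) $ x \<ge> 1 \<and>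
    fw A b (axis x 1) $ y \<ge> 0 \<and>
    (if b \<noteq> [] \<and> last b = y then - A$y$x * fw A b (axis x 1) $ y \<ge> 2 * fw A b (axis x 1) $ x
     else - A$x$y * fw A b (axis x 1) $ x \<ge> 2 * fw A b (axis x 1) $ y)"
proof (induction b rule: rev_induct)
  case Nil
  then show ?case using Aneg[OF xy] xy by (auto simp: axis_def)
next
  case (snoc c b)
  have hb: "set b \<subseteq> {x, y}" "successively (\<noteq>) b" "b \<noteq> [] \<longrightarrow> hd b = y"
    using snoc.prems by (auto simp: successively_append_iff)
  define f where "f = fw A b (axis x 1)"
  have IH: "(\<forall>k. k \<noteq> x \<longrightarrow> k \<noteq> y \<longrightarrow> f $ k = 0) \<and> f $ x \<ge> 1 \<and> f $ y \<ge> 0 \<and>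
    (if b \<noteq> [] \<and> last b = y then - A$y$x * f $ y \<ge> 2 * f $ x
     else - A$x$y * f $ x \<ge> 2 * f $ y)" using snoc.IH[OF hb] unfolding f_def .
  have fw: "fw A (b @ [c]) (axis x 1) = fmove A c f" by (simp add: fw_append f_def)
  have supp: "\<forall>k. k \<noteq> x \<longrightarrow> k \<noteq> y \<longrightarrow> f $ k = 0" using IH by blast
  have nyx: "\<not> E y x" using xy(2) Esym by metis
  have ax: "A$x$y < 0" "A$y$x < 0" using Aneg[OF xy] Aneg[OF _ nyx] xy(1) by auto
  have P: "A$x$y * A$y$x \<ge> 4" using Aprod[OF xy] .
  have c: "c = x \<or> c = y" using snoc.prems by auto
  show ?case
  proof (cases "c = y")
    case True
    have prev: "\<not> (b \<noteq> [] \<and> last b = y)"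
      using snoc.prems True by (cases b rule: rev_exhaust) (auto simp: successively_append_iff)
    then have inv: "- A$x$y * f $ x \<ge> 2 * f $ y" using IH by auto
    have ip: "f \<bullet> (\<chi> k. A$k$y) = f$x * A$x$y + f$y * 2"
      using supp2_inner[OF supp xy(1)] by simp
    have n: "fmove A c f $ k = (if k = y then - A$x$y * f$x - f$y else f$k)" for k
      using True by (simp add: fmove_nth ip)
    have fx: "f$x \<ge> 1" "f$y \<ge> 0" using IH by auto
    have F1: "(- A$y$x) * (- A$x$y * f $ x) \<ge> (- A$y$x) * (2 * f $ y)"
      using inv ax by (intro mult_left_mono) auto
    have F2: "(A$x$y * A$y$x) * f$x \<ge> 4 * f$x" using P fx by (intro mult_right_mono) auto
    have "- A$y$x * (- A$x$y * f$x - f$y) \<ge> 2 * f$x"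
      using F1 F2 by (simp add: algebra_simps)
    then show ?thesis unfolding fw using n supp xy inv fx True by auto
  next
    case False
    then have cx: "c = x" using c by auto
    have prev: "b \<noteq> [] \<and> last b = y"
    proof -
      have "b \<noteq> []" using snoc.prems cx False by auto
      moreover have "last b \<noteq> x" using snoc.prems cx \<open>b \<noteq> []\<close>
        by (cases b rule: rev_exhaust) (auto simp: successively_append_iff)
      moreover have "last b \<in> {x, y}" using hb(1) last_in_set[OF \<open>b \<noteq> []\<close>] by blast
      ultimately show ?thesis by auto
    qed
    then have inv: "- A$y$x * f $ y \<ge> 2 * f $ x" using IH by auto
    have ip: "f \<bullet> (\<chi> k. A$k$x) = f$x * 2 + f$y * A$y$x"
      using supp2_inner[OF supp xy(1)] by simp
    have n: "fmove A c f $ k = (if k = x then - A$y$x * f$y - f$x else f$k)" for k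
      using cx by (simp add: fmove_nth ip)
    have fx: "f$x \<ge> 1" "f$y \<ge> 0" using IH by auto
    have F1: "(- A$x$y) * (- A$y$x * f $ y) \<ge> (- A$x$y) * (2 * f $ x)"
      using inv ax by (intro mult_left_mono) auto
    have F2: "(A$x$y * A$y$x) * f$y \<ge> 4 * f$y" using P fx by (intro mult_right_mono) auto
    have "- A$x$y * (- A$y$x * f$y - f$x) \<ge> 2 * f$y"
      using F1 F2 by (simp add: algebra_simps)
    moreover have "- A$y$x * f$y - f$x \<ge> 1" using inv fx by linarith
    ultimately show ?thesis unfolding fw using n supp xy cx fx by auto
  qed
qed

end


context rc
begin

lemma root_Nil: "root [] s = axis s 1" by (simp add: root_def)

lemma root_ceq: "ceq E w w' \<Longrightarrow> root w s = root w' s"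
  unfolding root_def using fw_ceq ceq_rev by metis

lemma pos_comb: "pos f \<Longrightarrow> pos g \<Longrightarrow> a \<ge> 0 \<Longrightarrow> b \<ge> 0 \<Longrightarrow> pos (a *\<^sub>R f + b *\<^sub>R g)"
  unfolding pos_def by simp

lemma cox_len_ceq_le: "ceq E w (v @ u) \<Longrightarrow> cox_len E w \<le> cox_len E v + length u"
  using cox_len_ceq cox_len_append_len by metis

lemma tits: "cox_len E w < cox_len E (w @ [s]) \<Longrightarrow> pos (root w s)"
proof (induction "cox_len E w" arbitrary: w s rule: less_induct)
  case less
  show ?case
  proof (cases "cox_len E w = 0")
    case True
    then have "ceq E [] w" by (rule cox_len_zero)
    then have "root w s = root [] s" using root_ceq ceq_sym by metis
    then show ?thesis by (simp add: root_Nil pos_def axis_def)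
  next
    case False
    obtain w' where w': "length w' = cox_len E w" "ceq E w' w" using cox_len_ex by blast
    then obtain w'' t where w'': "w' = w'' @ [t]" using False by (cases w' rule: rev_exhaust) auto
    have "ceq E (w'' @ [t]) w" using w' w'' by simp
    have c1: "cox_len E w'' + 1 = cox_len E w"
    proof -
      have "cox_len E w'' \<le> length w''" by (rule cox_len_le_length)
      moreover have "cox_len E w \<le> cox_len E w'' + 1"
        using cox_len_ceq_le[of w w'' "[t]"] ceq_sym[OF \<open>ceq E (w'' @ [t]) w\<close>] by simp
      ultimately show ?thesis using w' w'' by simp
    qed
    have "ceq E (w @ [t]) ((w'' @ [t]) @ [t])"
      using ceq_app[OF ceq_sym[OF \<open>ceq E (w'' @ [t]) w\<close>] ceq_refl] .
    moreover have "ceq E ((w'' @ [t]) @ [t]) w''" using ceq_ss[of E w'' t] by simp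
    ultimately have "ceq E (w @ [t]) w''" by (rule ceq_trans)
    then have "cox_len E (w @ [t]) < cox_len E w" using cox_len_ceq c1 by (metis less_add_one)
    then have st: "s \<noteq> t" using less(2) by auto
    define P where "P = (\<lambda>va. set (snd va) \<subseteq> {s, t} \<and> ceq E w (fst va @ snd va) \<and>
                          cox_len E (fst va) + length (snd va) = cox_len E w)"
    have P0: "P (w'', [t])" unfolding P_def using c1 ceq_sym[OF \<open>ceq E (w'' @ [t]) w\<close>] by simp
    have bnd: "\<And>va. P va \<Longrightarrow> length (snd va) \<le> cox_len E w" unfolding P_def by auto
    have "\<exists>va. P va \<and> (\<forall>vb. P vb \<longrightarrow> length (snd vb) \<le> length (snd va))"
      by (rule ex_has_greatest_nat[of P "(w'',[t])" "\<lambda>va. length (snd va)" "Suc (cox_len E w)", OF P0]) (use bnd in \<open>simp add: less_Suc_eq_le\<close>)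
    then obtain va where Pva: "P va" and mx: "\<And>vb. P vb \<Longrightarrow> length (snd vb) \<le> length (snd va)"
      by blast
    obtain v a where va: "va = (v, a)" by (cases va)
    have Pa: "set a \<subseteq> {s,t}" "ceq E w (v @ a)" "cox_len E v + length a = cox_len E w"
      using Pva va unfolding P_def by auto
    have la: "length a \<ge> 1" using mx[OF P0] va by simp
    have asc: "cox_len E v < cox_len E (v @ [u])" if u: "u \<in> {s,t}" for u
    proof (rule ccontr)
      assume "\<not> ?thesis"
      then have 1: "cox_len E v = Suc (cox_len E (v@[u]))" using cox_len_snoc[of E v u] by auto
      have "ceq E (v @ [u, u] @ a) (v @ a)" by (rule ceq_cancel)
      then have "ceq E w ((v @ [u]) @ (u # a))" using Pa(2) ceq_sym ceq_trans by fastforce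
      then have "P (v @ [u], u # a)" using Pa u 1 unfolding P_def by simp
      then show False using mx va by force
    qed
    have lv: "cox_len E v < cox_len E w" using Pa(3) la by linarith
    have rs: "pos (root v s)" and rt: "pos (root v t)" using less(1)[OF lv] asc by auto
    have succ: "successively (\<noteq>) a"
    proof (rule ccontr)
      assume "\<not> ?thesis"
      then obtain p c q where pcq: "a = p @ [c,c] @ q" using not_successively_split by blast
      have "ceq E ((v @ p) @ [c,c] @ q) ((v @ p) @ q)" by (rule ceq_cancel)
      then have "ceq E w (v @ (p @ q))" using Pa(2) pcq ceq_trans by fastforce
      then have "cox_len E w \<le> cox_len E v + length (p @ q)" by (rule cox_len_ceq_le)
      then show False using Pa(3) pcq by simp
    qed
    have ane: "a \<noteq> []" using la by auto
    have lastt: "last a = t"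
    proof (rule ccontr)
      assume "last a \<noteq> t"
      then have "last a = s" using Pa(1) last_in_set[OF ane] by blast
      then obtain a' where a': "a = a' @ [s]" using ane by (cases a rule: rev_exhaust) auto
      have "ceq E (w @ [s]) ((v @ a) @ [s])" using ceq_app[OF Pa(2) ceq_refl] .
      moreover have "ceq E ((v @ a) @ [s]) (v @ a')" using a' ceq_ss[of E "v @ a'" s] by simp
      ultimately have "ceq E (w @ [s]) (v @ a')" by (rule ceq_trans)
      then have "cox_len E (w @ [s]) \<le> cox_len E v + length a'" by (rule cox_len_ceq_le)
      then show False using Pa(3) a' less(2) by simp
    qed
    have phi: "\<exists>x y. x \<ge> 0 \<and> y \<ge> 0 \<and> fw A (rev a) (axis s 1) = x *\<^sub>R axis s 1 + y *\<^sub>R axis t 1"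
    proof (cases "E s t")
      case True
      have "a = [t]"
      proof (rule ccontr)
        assume "a \<noteq> [t]"
        obtain a0 where a0: "a = a0 @ [t]" using ane lastt by (cases a rule: rev_exhaust) auto
        then have "a0 \<noteq> []" using \<open>a \<noteq> [t]\<close> by auto
        then obtain p c where pc0: "a0 = p @ [c]" by (cases a0 rule: rev_exhaust) auto
        have pc: "a = p @ [c, t]" using a0 pc0 by simp
        have "c \<noteq> t" using succ pc by (simp add: successively_append_iff)
        then have cs: "c = s" using Pa(1) pc by auto
        have "ceq E (w @ [s]) ((v @ a) @ [s])" using ceq_app[OF Pa(2) ceq_refl] .
        moreover have "ceq E ((v @ p) @ [s, t] @ [s]) ((v @ p) @ [t, s] @ [s])"
          by (rule ceq_step, rule cox_step.swap, rule True)
        moreover have "ceq E ((v @ p @ [t]) @ [s, s]) (v @ p @ [t])" by (rule ceq_ss)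
        ultimately have "ceq E (w @ [s]) (v @ (p @ [t]))" using pc cs
          by (auto elim!: ceq_trans)
        then have "cox_len E (w @ [s]) \<le> cox_len E v + length (p @ [t])" by (rule cox_len_ceq_le)
        then show False using Pa(3) pc less(2) by simp
      qed
      have "fw A (rev a) (axis s 1) = axis s 1"
      proof -
        have "fmove A t (axis s 1) $ k = axis s 1 $ k" for k
          using Acomm[OF True] st by (auto simp: fmove_nth)
        then show ?thesis using \<open>a = [t]\<close> by (simp add: vec_eq_iff)
      qed
      then show ?thesis by (rule_tac x=1 in exI, rule_tac x=0 in exI) simp
    next
      case False
      have ne: "(\<lambda>x y. y \<noteq> x) = ((\<noteq>)::'n\<Rightarrow>'n\<Rightarrow>bool)" by (auto simp: fun_eq_iff)
      have sr: "successively (\<noteq>) (rev a)" using succ successively_rev[of "(\<noteq>)" a] ne by metis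
      have h: "set (rev a) \<subseteq> {s, t}" "successively (\<noteq>) (rev a)" "rev a \<noteq> [] \<longrightarrow> hd (rev a) = t"
        using Pa(1) sr lastt by (auto simp: hd_rev)
      note R = rank2[OF st False h]
      show ?thesis
        apply (rule_tac x="fw A (rev a) (axis s 1) $ s" in exI)
        apply (rule_tac x="fw A (rev a) (axis s 1) $ t" in exI)
        using R supp2[OF _ st, of "fw A (rev a) (axis s 1)"] by auto
    qed
    then obtain x y where xy: "x \<ge> 0" "y \<ge> 0" "fw A (rev a) (axis s 1) = x *\<^sub>R axis s 1 + y *\<^sub>R axis t 1"
      by blast
    have "root w s = root (v @ a) s" using root_ceq[OF Pa(2)] .
    also have "\<dots> = fw A (rev v) (fw A (rev a) (axis s 1))" by (simp add: root_def fw_append)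
    also have "\<dots> = x *\<^sub>R root v s + y *\<^sub>R root v t" by (simp add: xy(3) fw_linear root_def)
    finally show ?thesis using pos_comb[OF rs rt xy(1,2)] by simp
  qed
qed

end


context rc
begin

lemma tits_neg: "cox_len E (w @ [s]) < cox_len E w \<Longrightarrow> neg (root w s)"
proof -
  assume a: "cox_len E (w @ [s]) < cox_len E w"
  have "ceq E ((w @ [s]) @ [s]) w" using ceq_ss[of E w s] by simp
  then have "cox_len E (w @ [s]) < cox_len E ((w @ [s]) @ [s])" using a cox_len_ceq by metis
  then have "pos (root (w @ [s]) s)" by (rule tits)
  moreover have "root (w @ [s]) s = - root w s" by (simp add: root_def fw_scale[of _ "-1", simplified])
  ultimately show ?thesis by (simp add: pos_def neg_def)
qed

definition isroot :: "real^'n \<Rightarrow> bool" where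
  "isroot f \<longleftrightarrow> (\<exists>k t. f = fw A k (axis t 1))"

lemma isroot_fmove: "isroot f \<Longrightarrow> isroot (fmove A s f)"
  unfolding isroot_def by (metis fw.simps fw_append)

lemma isroot_fw: "isroot f \<Longrightarrow> isroot (fw A u f)"
  unfolding isroot_def by (metis fw_append)

lemma dich: "isroot f \<Longrightarrow> pos f \<or> neg f"
proof -
  assume "isroot f"
  then obtain k t where f: "f = fw A k (axis t 1)" unfolding isroot_def by blast
  have r: "f = root (rev k) t" by (simp add: f root_def)
  show ?thesis using cox_len_snoc[of E "rev k" t] tits[of "rev k" t] tits_neg[of "rev k" t] r by auto
qed

lemma root_nonzero: "isroot f \<Longrightarrow> f \<noteq> 0"
proof -
  assume "isroot f"
  then obtain k t where f: "f = fw A k (axis t 1)" unfolding isroot_def by blast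
  have "f \<bullet> rho_word A (rev k) (axis t 1) = 1" by (simp add: f fw_inner)
  then show ?thesis by auto
qed

lemma pos_neg_zero: "pos f \<Longrightarrow> neg f \<Longrightarrow> f = 0"
  by (auto simp: pos_def neg_def vec_eq_iff intro: antisym)

lemma pos_sum: "pos f \<Longrightarrow> f \<noteq> 0 \<Longrightarrow> sum (\<lambda>i. f$i) UNIV > 0"
proof -
  assume p: "pos f" and nz: "f \<noteq> 0"
  then obtain i where "f$i \<noteq> 0" by (auto simp: vec_eq_iff)
  then have "f$i > 0" using p unfolding pos_def by (metis order_le_less)
  moreover have "f$i \<le> sum (\<lambda>i. f$i) UNIV"
    by (rule member_le_sum) (use p in \<open>auto simp: pos_def\<close>)
  ultimately show ?thesis by linarith
qed

lemma inner_vec_sum: "f \<bullet> (x::real^'n) = (\<Sum>i\<in>UNIV. f$i * x$i)"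
  by (simp add: inner_vec_def)

definition fund :: "(real^'n) set" where "fund = fund_chamber"

lemma pos_C: "pos f \<Longrightarrow> c \<in> fund_chamber \<Longrightarrow> f \<bullet> c \<le> 0"
  unfolding inner_vec_sum pos_def fund_chamber_def
  by (auto intro!: sum_nonpos mult_nonneg_nonpos)

lemma neg_C: "neg f \<Longrightarrow> c \<in> fund_chamber \<Longrightarrow> f \<bullet> c \<ge> 0"
  unfolding inner_vec_sum neg_def fund_chamber_def
  by (auto intro!: sum_nonneg mult_nonpos_nonpos)

definition nz :: "real^'n \<Rightarrow> real^'n" where
  "nz f = (1 / sum (\<lambda>i. f$i) UNIV) *\<^sub>R f"

lemma nz_scale: "c \<noteq> 0 \<Longrightarrow> nz (c *\<^sub>R f) = nz f"
  unfolding nz_def by (simp add: sum_distrib_left[symmetric])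

lemma nz_axis[simp]: "nz (axis s 1) = axis s 1"
proof -
  have "sum (\<lambda>i. axis s (1::real) $ i) UNIV = 1" by (simp add: axis_def)
  then show ?thesis unfolding nz_def by simp
qed

lemma fmove_scale: "fmove A s (c *\<^sub>R f) = c *\<^sub>R fmove A s f"
  using fmove_linear[of s c f 0 0] by simp

definition Pr :: "real^'n \<Rightarrow> (real^'n) set" where
  "Pr x = {nz f | f. isroot f \<and> pos f \<and> f \<bullet> x > 0}"

lemma Pr_C: "c \<in> fund_chamber \<Longrightarrow> Pr c = {}"
  unfolding Pr_def using pos_C by force

lemma single_supp: "\<forall>k. k \<noteq> s \<longrightarrow> f$k = 0 \<Longrightarrow> f = f$s *\<^sub>R axis s (1::real)"
  by (auto simp: vec_eq_iff axis_def)

lemma Pr_step: "Pr (rho_gen A s x) \<subseteq> insert (axis s 1) ((\<lambda>v. nz (fmove A s v)) ` Pr x)"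
proof
  fix v assume "v \<in> Pr (rho_gen A s x)"
  then obtain f where f: "v = nz f" "isroot f" "pos f" "f \<bullet> rho_gen A s x > 0"
    unfolding Pr_def by blast
  define g where "g = fmove A s f"
  have g: "isroot g" "g \<bullet> x > 0" using f by (auto simp: g_def isroot_fmove fmove_inner)
  show "v \<in> insert (axis s 1) ((\<lambda>v. nz (fmove A s v)) ` Pr x)"
  proof (cases "pos g")
    case True
    have gnz: "g \<noteq> 0" using root_nonzero g by blast
    have S: "sum (\<lambda>i. g$i) UNIV > 0" using pos_sum[OF True gnz] .
    have "nz g \<in> Pr x" unfolding Pr_def using g True by blast
    moreover have "nz (fmove A s (nz g)) = v"
      unfolding nz_def[of g] fmove_scale using S
      by (subst nz_scale) (auto simp: f(1) g_def)
    ultimately show ?thesis by blast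
  next
    case False
    then have "neg g" using dich g by blast
    then have "\<forall>k. k \<noteq> s \<longrightarrow> f$k = 0"
      using f(3) unfolding neg_def pos_def g_def by (metis fmove_nth order_antisym)
    then have fe: "f = f$s *\<^sub>R axis s 1" by (rule single_supp)
    have "f \<noteq> 0" using root_nonzero f by blast
    then have "f$s \<noteq> 0" using fe by (metis scale_zero_left)
    then have "nz f = axis s 1" using fe nz_scale by (metis nz_axis)
    then show ?thesis using f by simp
  qed
qed

lemma Pr_not: "x$s > 0 \<Longrightarrow> axis s 1 \<notin> Pr (rho_gen A s x)"
proof
  assume xs: "x$s > 0" and "axis s 1 \<in> Pr (rho_gen A s x)"
  then obtain f where f: "axis s 1 = nz f" "isroot f" "pos f" "f \<bullet> rho_gen A s x > 0"
    unfolding Pr_def by blast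
  have S: "sum (\<lambda>i. f$i) UNIV > 0" using pos_sum f root_nonzero by blast
  have "f = sum (\<lambda>i. f$i) UNIV *\<^sub>R nz f" using S unfolding nz_def by simp
  then have "f = sum (\<lambda>i. f$i) UNIV *\<^sub>R axis s 1" using f by simp
  then have "f \<bullet> rho_gen A s x = sum (\<lambda>i. f$i) UNIV * (rho_gen A s x $ s)"
    by (metis inner_axis1(2) inner_scaleR_left)
  also have "\<dots> = - sum (\<lambda>i. f$i) UNIV * x$s" by (simp add: rho_gen_nth)
  finally have "f \<bullet> rho_gen A s x = - (sum (\<lambda>i. f$i) UNIV * x$s)" by simp
  moreover have "sum (\<lambda>i. f$i) UNIV * x$s > 0" using S xs by simp
  ultimately show False using f(4) by linarith
qed

lemma Pr_in: "x$s > 0 \<Longrightarrow> axis s 1 \<in> Pr x"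
proof -
  assume xs: "x$s > 0"
  have "isroot (axis s 1)" unfolding isroot_def by (rule exI[of _ "[]"], rule exI[of _ s]) simp
  moreover have "pos (axis s 1)" by (simp add: pos_def axis_def)
  moreover have "axis s 1 \<bullet> x > 0" using xs by simp
  ultimately show ?thesis unfolding Pr_def by (metis (mono_tags, lifting) CollectI nz_axis)
qed

definition U :: "(real^'n) set" where "U = (\<Union>w. rho_word A w ` fund_chamber)"

lemma U_fin: "x \<in> U \<Longrightarrow> finite (Pr x)"
proof -
  assume "x \<in> U"
  then obtain w c where x: "x = rho_word A w c" "c \<in> fund_chamber" unfolding U_def by blast
  have "finite (Pr (rho_word A w c))"
  proof (induction w)
    case Nil then show ?case using Pr_C[OF x(2)] by simp
  next
    case (Cons a w)
    then show ?case using Pr_step[of a "rho_word A w c"] by (auto intro: finite_subset)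
  qed
  then show ?thesis using x by simp
qed

lemma fin_U: "finite (Pr x) \<Longrightarrow> x \<in> U"
proof (induction "card (Pr x)" arbitrary: x rule: less_induct)
  case less
  show ?case
  proof (cases "\<forall>s. x$s \<le> 0")
    case True
    then have "x \<in> rho_word A [] ` fund_chamber" by (simp add: fund_chamber_def)
    then show ?thesis unfolding U_def by (rule UN_I[OF UNIV_I])
  next
    case False
    then obtain s where xs: "x$s > 0" by (auto simp: not_le)
    define y where "y = rho_gen A s x"
    define F where "F = (\<lambda>v. nz (fmove A s v))"
    have Fe: "F (axis s 1) = axis s 1" unfolding F_def using nz_scale[of "-1" "axis s 1"] by simp
    have sub: "Pr y \<subseteq> F ` (Pr x - {axis s 1})"
    proof
      fix v assume v: "v \<in> Pr y"
      then have "v \<noteq> axis s 1" using Pr_not[OF xs] y_def by blast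
      moreover have "v \<in> insert (axis s 1) (F ` Pr x)" using Pr_step v y_def F_def by blast
      ultimately show "v \<in> F ` (Pr x - {axis s 1})" using Fe by auto
    qed
    have fy: "finite (Pr y)" using sub less(2) by (auto intro: finite_subset)
    have "card (Pr y) \<le> card (F ` (Pr x - {axis s 1}))" using sub less(2) by (auto intro: card_mono)
    also have "\<dots> \<le> card (Pr x - {axis s 1})" using less(2) by (auto intro: card_image_le)
    also have "\<dots> < card (Pr x)" by (rule card_Diff1_less[OF less(2) Pr_in[OF xs]])
    finally have "card (Pr y) < card (Pr x)" .
    then have "y \<in> U" using less(1) fy by simp
    then obtain w c where "y = rho_word A w c" "c \<in> fund_chamber" unfolding U_def by blast
    then have "x = rho_word A (s # w) c" using y_def rho_gen_invol by (metis rho_word.simps(2) comp_apply)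
    then have "x \<in> rho_word A (s # w) ` fund_chamber" using \<open>c \<in> fund_chamber\<close> by (rule image_eqI)
    then show ?thesis unfolding U_def by (rule UN_I[OF UNIV_I])
  qed
qed

lemma U_iff: "x \<in> U \<longleftrightarrow> finite (Pr x)"
  using U_fin fin_U by blast

lemma convex_U: "convex U"
  unfolding convex_def
proof (intro ballI allI impI)
  fix x y and u v :: real
  assume xy: "x \<in> U" "y \<in> U" and uv: "0 \<le> u" "0 \<le> v" "u + v = 1"
  have "Pr (u *\<^sub>R x + v *\<^sub>R y) \<subseteq> Pr x \<union> Pr y"
  proof
    fix z assume "z \<in> Pr (u *\<^sub>R x + v *\<^sub>R y)"
    then obtain f where f: "z = nz f" "isroot f" "pos f" "f \<bullet> (u *\<^sub>R x + v *\<^sub>R y) > 0"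
      unfolding Pr_def by blast
    have "f \<bullet> x > 0 \<or> f \<bullet> y > 0"
    proof (rule ccontr)
      assume "\<not> ?thesis"
      then have "u * (f \<bullet> x) \<le> 0" "v * (f \<bullet> y) \<le> 0" using uv
        by (auto intro: mult_nonneg_nonpos)
      then show False using f(4) by (simp add: inner_add_right)
    qed
    then show "z \<in> Pr x \<union> Pr y" unfolding Pr_def using f by blast
  qed
  then show "u *\<^sub>R x + v *\<^sub>R y \<in> U" using xy U_iff by (meson finite_Un finite_subset)
qed

lemma rho_U: "x \<in> U \<Longrightarrow> rho_word A w x \<in> U"
proof -
  assume "x \<in> U"
  then obtain w' c where "x = rho_word A w' c" "c \<in> fund_chamber" unfolding U_def by blast
  then have "rho_word A w x = rho_word A (w @ w') c" by (simp add: rho_word_append)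
  then have "rho_word A w x \<in> rho_word A (w @ w') ` fund_chamber" using \<open>c \<in> fund_chamber\<close> by (rule image_eqI)
  then show ?thesis unfolding U_def by (rule UN_I[OF UNIV_I])
qed

lemma rho_image_U: "rho_word A w ` U = U"
proof
  show "rho_word A w ` U \<subseteq> U" using rho_U by blast
  show "U \<subseteq> rho_word A w ` U"
  proof
    fix x assume "x \<in> U"
    then have "rho_word A (rev w) x \<in> U" by (rule rho_U)
    moreover have "x = rho_word A w (rho_word A (rev w) x)" by simp
    ultimately show "x \<in> rho_word A w ` U" by blast
  qed
qed

lemma rho_int: "x \<in> interior U \<Longrightarrow> rho_word A w x \<in> interior U"
proof -
  assume "x \<in> interior U"
  have "interior (rho_word A w ` U) = rho_word A w ` interior U"
    by (rule interior_bijective_linear_image[OF linear_rho bij_rho])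
  then show ?thesis using rho_image_U \<open>x \<in> interior U\<close> by auto
qed

lemma convex_int: "convex (interior U)"
  by (rule convex_interior[OF convex_U])

end


context rc
begin

fun altw :: "'n \<Rightarrow> 'n \<Rightarrow> nat \<Rightarrow> 'n list" where
  "altw s t 0 = []"
| "altw s t (Suc k) = (if even k then s else t) # altw s t k"

lemma altw_set: "set (altw s t k) \<subseteq> {s, t}"
  by (induction k) auto

lemma altw_hd: "altw s t (Suc k) \<noteq> [] \<and> hd (altw s t (Suc k)) = (if even k then s else t)"
  by simp

lemma altw_succ: "s \<noteq> t \<Longrightarrow> successively (\<noteq>) (altw s t k)"
proof (induction k)
  case 0 then show ?case by simp
next
  case (Suc k)
  then show ?case by (cases k) (auto simp: successively_Cons)
qed

lemma sum_single_nz: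
  fixes f :: "'n \<Rightarrow> real"
  assumes "\<And>u. u \<noteq> j \<Longrightarrow> f u = 0"
  shows "sum f UNIV = f j"
proof -
  have "sum f UNIV = f j + sum f (UNIV - {j})" by (simp add: sum.remove)
  moreover have "sum f (UNIV - {j}) = 0" using assms by (intro sum.neutral) auto
  ultimately show ?thesis by simp
qed

lemma clique:
  assumes c: "c \<in> fund_chamber" "c \<in> interior U" and st: "s \<noteq> t" "\<not> E s t" and z: "c$s = 0" "c$t = 0"
  shows False
proof -
  obtain e where e: "e > 0" "ball c e \<subseteq> U" using c(2) by (auto simp: mem_interior)
  define d :: "real^'n" where "d = axis s 1 + axis t 1"
  define p where "p = c + (e/4) *\<^sub>R d"
  have "norm d \<le> 2" unfolding d_def using norm_triangle_ineq[of "axis s (1::real)" "axis t 1"]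
    by simp
  then have "dist c p < e" unfolding p_def dist_norm using e(1) by simp
  then have "p \<in> U" using e(2) by auto
  then obtain w c' where p: "p = rho_word A w c'" "c' \<in> fund_chamber" unfolding U_def by blast
  have nts: "\<not> E t s" using st(2) Esym by metis
  define nx where "nx = (\<lambda>k::nat. if even k then s else t)"
  have main: "cox_len E (rev w @ rev (altw s t k)) + k \<le> cox_len E (rev w)" for k
  proof (induction k)
    case 0 then show ?case by simp
  next
    case (Suc k)
    define x where "x = nx k"
    define y where "y = nx (Suc k)"
    have xy: "x \<noteq> y" "\<not> E x y" using st nts by (auto simp: x_def y_def nx_def)
    have h: "set (altw s t k) \<subseteq> {x, y}" using altw_set by (auto simp: x_def y_def nx_def)
    have h2: "successively (\<noteq>) (altw s t k)" using altw_succ st by blast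
    have h3: "altw s t k \<noteq> [] \<longrightarrow> hd (altw s t k) = y"
      by (cases k) (auto simp: y_def nx_def)
    note R = rank2[OF xy h h2 h3]
    define \<phi> where "\<phi> = fw A (altw s t k) (axis x 1)"
    have supp: "\<forall>k. k \<noteq> x \<longrightarrow> k \<noteq> y \<longrightarrow> \<phi> $ k = 0" and px: "\<phi>$x \<ge> 1" and py: "\<phi>$y \<ge> 0"
      using R by (auto simp: \<phi>_def)
    have "\<phi> \<bullet> c = \<phi>$x * c$x + \<phi>$y * c$y" by (rule supp2_inner[OF supp xy(1)])
    also have "\<dots> = 0" using z by (auto simp: x_def y_def nx_def)
    finally have pc: "\<phi> \<bullet> c = 0" .
    have "\<phi> \<bullet> d = \<phi>$s + \<phi>$t" by (simp add: d_def inner_add_right)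
    also have "\<dots> = \<phi>$x + \<phi>$y" using st by (auto simp: x_def y_def nx_def)
    finally have "\<phi> \<bullet> d \<ge> 1" using px py by simp
    then have "\<phi> \<bullet> p > 0" using pc e(1) by (simp add: p_def inner_add_right)
    have rt: "root (rev w @ rev (altw s t k)) x = fw A w \<phi>"
      by (simp add: root_def \<phi>_def fw_append)
    have "fw A w \<phi> \<bullet> c' > 0" using \<open>\<phi> \<bullet> p > 0\<close> p by (simp add: fw_inner)
    then have "\<not> pos (root (rev w @ rev (altw s t k)) x)" using pos_C[OF _ p(2)] rt by force
    then have "\<not> cox_len E (rev w @ rev (altw s t k)) < cox_len E ((rev w @ rev (altw s t k)) @ [x])"
      using tits by blast
    then have "cox_len E (rev w @ rev (altw s t k)) = Suc (cox_len E ((rev w @ rev (altw s t k)) @ [x]))"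
      using cox_len_snoc by (metis lessI)
    moreover have "rev w @ rev (altw s t (Suc k)) = (rev w @ rev (altw s t k)) @ [x]"
      by (simp add: x_def nx_def)
    ultimately show ?case using Suc.IH by simp
  qed
  show False using main[of "Suc (cox_len E (rev w))"] by simp
qed

lemma support_single:
  assumes r: "isroot g" and J: "\<And>j k. j \<noteq> k \<Longrightarrow> g$j \<noteq> 0 \<Longrightarrow> g$k \<noteq> 0 \<Longrightarrow> E j k"
  shows "\<exists>j. \<forall>k. k \<noteq> j \<longrightarrow> g$k = 0"
proof (rule ccontr)
  assume na: "\<not> ?thesis"
  then obtain j where j: "g$j \<noteq> 0" using root_nonzero[OF r] by (auto simp: vec_eq_iff)
  then obtain k where k: "k \<noteq> j" "g$k \<noteq> 0" using na by blast
  define g' where "g' = fmove A j g"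
  have "g \<bullet> (\<chi> u. A$u$j) = (\<Sum>u\<in>UNIV. g$u * A$u$j)" by (simp add: inner_vec_sum)
  also have "\<dots> = g$j * A$j$j"
  proof (rule sum_single_nz)
    fix u assume "u \<noteq> j"
    show "g$u * A$u$j = 0"
    proof (cases "g$u = 0")
      case False
      have "E u j" by (rule J[OF \<open>u \<noteq> j\<close> False j])
      then show ?thesis using Acomm by simp
    qed simp
  qed
  finally have gv: "g \<bullet> (\<chi> u. A$u$j) = 2 * g$j" by simp
  have g'j: "g'$j = - g$j" and g'k: "g'$k = g$k"
    using k gv by (auto simp: g'_def fmove_nth)
  have "isroot g'" using isroot_fmove[OF r] by (simp add: g'_def)
  then have "pos g' \<or> neg g'" by (rule dich)
  moreover have "pos g \<or> neg g" using dich[OF r] .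
  moreover have "\<not> pos g'" if "pos g" using that g'j j unfolding pos_def
    by (metis neg_0_le_iff_le order_antisym)
  moreover have "\<not> neg g'" if "pos g" using that g'k k unfolding pos_def neg_def
    by (metis order_antisym)
  moreover have "\<not> pos g'" if "neg g" using that g'k k unfolding pos_def neg_def
    by (metis order_antisym)
  moreover have "\<not> neg g'" if "neg g" using that g'j j unfolding neg_def
    by (metis neg_le_0_iff_le order_antisym)
  ultimately show False by blast
qed

lemma fw_refl_word:
  assumes K: "fw A K (axis t 1) = l *\<^sub>R axis j 1"
  shows "fw A (rev K @ [t] @ K) f = f - (l * (f \<bullet> rho_word A (rev K) (\<chi> k. A$k$t))) *\<^sub>R axis j 1"
proof (rule vec_eq_inner)
  fix x
  define u where "u = rho_word A (rev K) (\<chi> k. A$k$t)"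
  have "rho_word A K x $ t = l * x$j"
    using fw_inner[of K "axis t 1" x] K by simp
  then have "rho_word A (rev K @ [t] @ K) x = rho_word A (rev K) (rho_word A K x - (l * x$j) *\<^sub>R (\<chi> k. A$k$t))"
    by (simp add: rho_word_append rho_gen_def)
  also have "\<dots> = x - (l * x$j) *\<^sub>R u"
    using linear_rho[of "rev K"] by (simp add: linear_diff linear_scale u_def)
  finally have eq: "rho_word A (rev K @ [t] @ K) x = x - (l * x$j) *\<^sub>R u" .
  have "fw A (rev K @ [t] @ K) f \<bullet> x = f \<bullet> rho_word A (rev K @ [t] @ K) x" by (rule fw_inner)
  also have "\<dots> = f \<bullet> (x - (l * x$j) *\<^sub>R u)" by (simp only: eq)
  also have "\<dots> = (f - (l * (f \<bullet> u)) *\<^sub>R axis j 1) \<bullet> x"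
    by (simp add: inner_diff_left inner_diff_right algebra_simps)
  finally show "fw A (rev K @ [t] @ K) f \<bullet> x = (f - (l * (f \<bullet> u)) *\<^sub>R axis j 1) \<bullet> x" .
qed

lemma same_refl:
  assumes K: "fw A K (axis t 1) = l *\<^sub>R axis j 1" and l: "l \<noteq> 0"
  shows "ceq E (rev K @ [t] @ K) [j]"
proof -
  define q where "q = rev K @ [t] @ K"
  define w where "w = q @ [j]"
  define u where "u = rho_word A (rev K) (\<chi> k. A$k$t)"
  have lu: "l * u$j = 2"
  proof -
    have "fw A K (axis t 1) \<bullet> u = axis t 1 \<bullet> rho_word A K u" by (rule fw_inner)
    also have "\<dots> = 2" by (simp add: u_def)
    finally show ?thesis using K by simp
  qed
  have rq: "rev q = q" by (simp add: q_def)
  have asc: "cox_len E w < cox_len E (w @ [s])" for s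
  proof (rule ccontr)
    assume "\<not> ?thesis"
    then have "cox_len E (w @ [s]) < cox_len E w" using cox_len_snoc[of E w s] by auto
    then have n: "neg (root w s)" by (rule tits_neg)
    have "root w s = fw A q (fmove A j (axis s 1))"
      by (simp add: root_def w_def rq)
    also have "\<dots> = fmove A j (axis s 1) - (l * (fmove A j (axis s 1) \<bullet> u)) *\<^sub>R axis j 1"
      unfolding q_def u_def by (rule fw_refl_word[OF K])
    finally have rw: "root w s = \<dots>" .
    have "root w s $ s = 1"
    proof (cases "s = j")
      case True
      have f: "fmove A j (axis s 1) = - axis j 1" using True by simp
      have rw2: "root w s = - axis j 1 - (l * (- axis j 1 \<bullet> u)) *\<^sub>R axis j (1::real)"
        using rw unfolding f .
      have "root w s $ s = (- axis j 1 - (l * (- axis j 1 \<bullet> u)) *\<^sub>R axis j (1::real)) $ s"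
        by (simp only: rw2)
      also have "\<dots> = -1 + l * u$j" using True by simp
      finally show ?thesis using lu by simp
    next
      case False
      then show ?thesis by (simp add: rw fmove_nth axis_def)
    qed
    then show False using n unfolding neg_def by (metis not_one_le_zero)
  qed
  have "cox_len E w = 0"
  proof (rule ccontr)
    assume "cox_len E w \<noteq> 0"
    obtain w' where w': "length w' = cox_len E w" "ceq E w' w" using cox_len_ex by blast
    then obtain w'' s where w'': "w' = w'' @ [s]" using \<open>cox_len E w \<noteq> 0\<close>
      by (cases w' rule: rev_exhaust) auto
    have "ceq E (w @ [s]) ((w'' @ [s]) @ [s])" using ceq_app[OF ceq_sym[OF w'(2)] ceq_refl] w'' by simp
    moreover have "ceq E ((w'' @ [s]) @ [s]) w''" using ceq_ss[of E w'' s] by simp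
    ultimately have "ceq E (w @ [s]) w''" by (rule ceq_trans)
    then have "cox_len E (w @ [s]) \<le> length w''" by (metis cox_len_ceq cox_len_le_length)
    then show False using asc[of s] w' w'' by simp
  qed
  then have "ceq E [] w" by (rule cox_len_zero)
  then have c1: "ceq E ([] @ [j]) (w @ [j])" using ceq_app[OF _ ceq_refl] by blast
  have c2: "ceq E (w @ [j]) q" using ceq_ss[of E q j] by (simp add: w_def)
  have "ceq E [j] q" using ceq_trans[OF c1 c2] by simp
  then show ?thesis unfolding q_def by (rule ceq_sym)
qed

end


context rc
begin

lemma supp_zero:
  assumes r: "isroot g" and c: "c \<in> fund_chamber" and z: "g \<bullet> c = 0" and k: "g$k \<noteq> 0"
  shows "c$k = 0"
proof -
  have cn: "\<forall>i. c$i \<le> 0" using c by (simp add: fund_chamber_def)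
  have sum0: "(\<Sum>i\<in>UNIV. g$i * c$i) = 0" using z by (simp add: inner_vec_sum)
  from dich[OF r] show ?thesis
  proof
    assume "pos g"
    then have t: "\<forall>i\<in>UNIV. 0 \<le> - (g$i * c$i)" using cn unfolding pos_def
      by (simp add: mult_nonneg_nonpos)
    have "(\<Sum>i\<in>UNIV. - (g$i * c$i)) = 0" using sum0 by (simp add: sum_negf)
    moreover have "(\<Sum>i\<in>UNIV. - (g$i * c$i)) = 0 \<longleftrightarrow> (\<forall>i\<in>UNIV. - (g$i * c$i) = 0)"
      by (rule sum_nonneg_eq_0_iff) (use t in auto)
    ultimately have "\<forall>i\<in>UNIV. - (g$i * c$i) = 0" by simp
    then show ?thesis using k by (metis UNIV_I mult_eq_0_iff neg_equal_0_iff_equal)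
  next
    assume "neg g"
    then have t: "\<forall>i\<in>UNIV. 0 \<le> g$i * c$i" using cn unfolding neg_def
      by (simp add: mult_nonpos_nonpos)
    moreover have "(\<Sum>i\<in>UNIV. g$i * c$i) = 0 \<longleftrightarrow> (\<forall>i\<in>UNIV. g$i * c$i = 0)"
      by (rule sum_nonneg_eq_0_iff) (use t in auto)
    ultimately have "\<forall>i\<in>UNIV. g$i * c$i = 0" using sum0 by simp
    then show ?thesis using k by (metis UNIV_I mult_eq_0_iff)
  qed
qed

lemma conj_back: "ceq E (rev h @ X @ h) [j] \<Longrightarrow> ceq E (h @ [j] @ rev h) X"
proof -
  assume a: "ceq E (rev h @ X @ h) [j]"
  have "ceq E (h @ [j] @ rev h) (h @ (rev h @ X @ h) @ rev h)" by (rule ceq_ctxt[OF ceq_sym[OF a]])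
  moreover have "h @ (rev h @ X @ h) @ rev h = (h @ rev h) @ X @ (h @ rev h)" by simp
  moreover have "ceq E ((h @ rev h) @ X @ (h @ rev h)) ([] @ X @ [])"
    by (intro ceq_app ceq_cancel_rev ceq_refl)
  ultimately show ?thesis by (auto intro: ceq_trans)
qed

lemma A1_one:
  assumes c: "c \<in> fund_chamber" "c \<in> interior U"
    and cl: "\<And>j k. j \<noteq> k \<Longrightarrow> c$j = 0 \<Longrightarrow> c$k = 0 \<Longrightarrow> E j k"
    and b: "fw A (rev g) (axis s 1) \<bullet> rho_word A h c = 0"
  shows "\<exists>j. c$j = 0 \<and> ceq E (h @ [j] @ rev h) (g @ [s] @ rev g)"
proof -
  define \<gamma> where "\<gamma> = fw A (rev g @ h) (axis s 1)"
  have r: "isroot \<gamma>" unfolding \<gamma>_def isroot_def by blast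
  have gc: "\<gamma> \<bullet> c = 0" using b by (simp add: \<gamma>_def fw_append fw_inner)
  have sz: "\<And>k. \<gamma>$k \<noteq> 0 \<Longrightarrow> c$k = 0" using supp_zero[OF r c(1) gc] by blast
  obtain j where j: "\<forall>k. k \<noteq> j \<longrightarrow> \<gamma>$k = 0"
    using support_single[OF r] cl sz by blast
  have ge: "\<gamma> = \<gamma>$j *\<^sub>R axis j 1" using single_supp[OF j] .
  have "\<gamma>$j \<noteq> 0" using root_nonzero[OF r] ge by (metis scale_zero_left)
  then have cj: "c$j = 0" using sz by blast
  have "ceq E (rev (rev g @ h) @ [s] @ (rev g @ h)) [j]"
    using same_refl[of "rev g @ h" s "\<gamma>$j" j] ge \<open>\<gamma>$j \<noteq> 0\<close> by (simp add: \<gamma>_def)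
  then have "ceq E (rev h @ (g @ [s] @ rev g) @ h) [j]" by simp
  then have "ceq E (h @ [j] @ rev h) (g @ [s] @ rev g)" by (rule conj_back)
  then show ?thesis using cj by blast
qed

lemma A1:
  assumes y: "y \<in> interior U" and b0: "fw A (rev g0) (axis s0 1) \<bullet> y = 0"
    and b1: "fw A (rev g1) (axis s1 1) \<bullet> y = 0"
  shows "\<exists>h j0 j1. ceq E (h @ [j0] @ rev h) (g0 @ [s0] @ rev g0) \<and>
                  ceq E (h @ [j1] @ rev h) (g1 @ [s1] @ rev g1) \<and> (j0 = j1 \<or> E j0 j1)"
proof -
  have "y \<in> U" using y interior_subset by blast
  then obtain h c where yc: "y = rho_word A h c" "c \<in> fund_chamber" unfolding U_def by blast
  have "c = rho_word A (rev h) y" using yc by simp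
  then have ci: "c \<in> interior U" using rho_int[OF y] by simp
  have cl: "E j k" if "j \<noteq> k" "c$j = 0" "c$k = 0" for j k
  proof (rule ccontr)
    assume "\<not> E j k"
    then show False using clique[OF yc(2) ci that(1) _ that(2,3)] by blast
  qed
  obtain j0 where j0: "c$j0 = 0" "ceq E (h @ [j0] @ rev h) (g0 @ [s0] @ rev g0)"
    using A1_one[OF yc(2) ci cl] b0 yc(1) by blast
  obtain j1 where j1: "c$j1 = 0" "ceq E (h @ [j1] @ rev h) (g1 @ [s1] @ rev g1)"
    using A1_one[OF yc(2) ci cl] b1 yc(1) by blast
  have "j0 = j1 \<or> E j0 j1" using cl j0(1) j1(1) by blast
  then show ?thesis using j0 j1 by blast
qed

lemma face_int: "(\<chi> k. if k = s then (0::real) else -1) \<in> interior U"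
proof -
  define c0 :: "real^'n" where "c0 = (\<chi> k. if k = s then (0::real) else -1)"
  define S where "S = (\<Sum>j\<in>UNIV. \<bar>A$j$s\<bar>)"
  have S0: "S \<ge> 0" unfolding S_def by (simp add: sum_nonneg)
  define d where "d = 1 / (2 * (1 + S))"
  have d0: "d > 0" using S0 by (simp add: d_def)
  have dS: "d * S < 1/2" using S0 by (simp add: d_def field_simps)
  have d2: "d \<le> 1/2" using S0 by (simp add: d_def field_simps)
  have "ball c0 d \<subseteq> U"
  proof
    fix x assume "x \<in> ball c0 d"
    then have nx: "norm (x - c0) < d" by (simp add: dist_norm norm_minus_commute)
    have comp: "\<bar>x$k - c0$k\<bar> < d" for k
      using component_le_norm_cart[of "x - c0" k] nx by simp
    have xk: "x$k < 0" if "k \<noteq> s" for k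
      using comp[of k] that d2 by (simp add: c0_def abs_less_iff)
    have xk2: "x$k < - 1/2" if "k \<noteq> s" for k
      using comp[of k] that d2 by (simp add: c0_def abs_less_iff)
    have xs: "\<bar>x$s\<bar> < d" using comp[of s] by (simp add: c0_def)
    show "x \<in> U"
    proof (cases "x$s \<le> 0")
      case True
      then have "x \<in> fund_chamber" using xk by (auto simp: fund_chamber_def) (metis less_imp_le)
      then have "x \<in> rho_word A [] ` fund_chamber" by simp
      then show ?thesis unfolding U_def by (rule UN_I[OF UNIV_I])
    next
      case False
      define y where "y = rho_gen A s x"
      have "y \<in> fund_chamber"
        unfolding fund_chamber_def
      proof (intro CollectI allI)
        fix k
        show "y$k \<le> 0"
        proof (cases "k = s")
          case True
          then show ?thesis using False by (simp add: y_def rho_gen_nth)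
        next
          case ks: False
          have Ak: "\<bar>A$k$s\<bar> \<le> S" unfolding S_def by (rule member_le_sum) auto
          have "- (x$s * A$k$s) \<le> \<bar>x$s\<bar> * \<bar>A$k$s\<bar>" by (simp add: abs_mult[symmetric])
          also have "\<dots> \<le> d * S" using xs Ak by (intro mult_mono) auto
          finally have "- (x$s * A$k$s) < 1/2" using dS by linarith
          then show ?thesis using xk2[OF ks] by (simp add: y_def rho_gen_nth)
        qed
      qed
      moreover have "x = rho_word A [s] y" by (simp add: y_def)
      ultimately have "x \<in> rho_word A [s] ` fund_chamber" by blast
      then show ?thesis unfolding U_def by (rule UN_I[OF UNIV_I])
    qed
  qed
  then show ?thesis unfolding c0_def[symmetric] using d0 by (auto simp: mem_interior)
qed

end


context rc
begin

lemma cox_len_append_len2: "cox_len E (u @ v) \<le> length u + cox_len E v"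
  using cox_len_append[of E u v] cox_len_le_length[of E u] by linarith

lemma cox_len_split:
  assumes "cox_len E (p @ q) = length (p @ q)"
  shows "cox_len E p = length p" "cox_len E q = length q"
  using assms cox_len_append_len[of E p q] cox_len_append_len2[of p q]
    cox_len_le_length[of E p] cox_len_le_length[of E q] by auto

lemma mid_int: "p \<in> interior U \<Longrightarrow> y \<in> interior U \<Longrightarrow> 0 \<le> u \<Longrightarrow> u \<le> 1 \<Longrightarrow>
  (1 - u) *\<^sub>R p + u *\<^sub>R y \<in> interior U"
  by (rule convexD[OF convex_int]) auto

lemma seg_zero:
  fixes f p y :: "real^'n"
  assumes "f \<bullet> p \<le> 0" "0 \<le> f \<bullet> y"
  shows "\<exists>u. 0 \<le> u \<and> u \<le> 1 \<and> f \<bullet> ((1 - u) *\<^sub>R p + u *\<^sub>R y) = 0"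
proof (cases "f \<bullet> p = f \<bullet> y")
  case True
  then show ?thesis using assms by (rule_tac x=0 in exI) simp
next
  case False
  define u where "u = (f \<bullet> p) / (f \<bullet> p - f \<bullet> y)"
  have d: "f \<bullet> p - f \<bullet> y < 0" using assms False by linarith
  have "0 \<le> u" unfolding u_def using d assms by (simp add: divide_nonpos_neg)
  moreover have "u \<le> 1" unfolding u_def using d assms by (simp add: divide_le_eq)
  moreover have "f \<bullet> ((1 - u) *\<^sub>R p + u *\<^sub>R y) = f \<bullet> p - u * (f \<bullet> p - f \<bullet> y)"
    by (simp add: inner_add_right algebra_simps)
  moreover have "u * (f \<bullet> p - f \<bullet> y) = f \<bullet> p" unfolding u_def using d by simp
  ultimately show ?thesis by (rule_tac x=u in exI) simp
qed

lemma rho_refl: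
  assumes "ceq E (g @ [s] @ rev g) r"
  shows "rho_word A r y = y - (fw A (rev g) (axis s 1) \<bullet> y) *\<^sub>R rho_word A g (\<chi> j. A$j$s)"
proof -
  have "rho_word A r y = rho_word A (g @ [s] @ rev g) y" using rho_ceq[OF assms] by simp
  also have "\<dots> = rho_word A g (rho_word A (rev g) y - (rho_word A (rev g) y $ s) *\<^sub>R (\<chi> j. A$j$s))"
    by (simp add: rho_word_append rho_gen_def)
  also have "\<dots> = y - (rho_word A (rev g) y $ s) *\<^sub>R rho_word A g (\<chi> j. A$j$s)"
    using linear_rho[of g] by (simp add: linear_diff linear_scale)
  also have "rho_word A (rev g) y $ s = fw A (rev g) (axis s 1) \<bullet> y"
    by (simp add: fw_inner)
  finally show ?thesis .
qed

lemma wall_beta: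
  assumes e: "ceq E (g @ [s] @ rev g) r" and y: "y \<in> omega_wall A r" and z: "0 \<notin> interior U"
  shows "fw A (rev g) (axis s 1) \<bullet> y = 0"
proof (rule ccontr)
  define b where "b = fw A (rev g) (axis s 1) \<bullet> y"
  define V where "V = rho_word A g (\<chi> j. A$j$s)"
  assume "fw A (rev g) (axis s 1) \<bullet> y \<noteq> 0"
  then have b0: "b \<noteq> 0" by (simp add: b_def)
  have yi: "y \<in> interior U" using y unfolding omega_wall_def vinberg_cone_def U_def by simp
  obtain c where c: "rho_word A r y = c *\<^sub>R y" using y unfolding omega_wall_def by blast
  have eq: "y - b *\<^sub>R V = c *\<^sub>R y" using rho_refl[OF e, of y] c by (simp add: b_def V_def)
  have bV: "fw A (rev g) (axis s 1) \<bullet> V = 2" by (simp add: V_def fw_inner)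
  have "fw A (rev g) (axis s 1) \<bullet> (y - b *\<^sub>R V) = b - 2 * b" using bV by (simp add: inner_diff_right b_def)
  moreover have "fw A (rev g) (axis s 1) \<bullet> (c *\<^sub>R y) = c * b" by (simp add: b_def)
  ultimately have "b - 2 * b = c * b" using eq by simp
  then have "(c + 1) * b = 0" by (simp add: algebra_simps)
  then have "c = -1" using b0 by simp
  then have "rho_word A r y = - y" using c by simp
  then have "- y \<in> interior U" using rho_int[OF yi, of r] by simp
  then have "(1/2) *\<^sub>R y + (1/2) *\<^sub>R (- y) \<in> interior U"
    by (intro convexD[OF convex_int yi]) auto
  then show False using z by simp
qed

lemma disj_hyp:
  assumes ea: "ceq E (ga @ [sa] @ rev ga) ra" and eb: "ceq E (gb @ [sb] @ rev gb) rb"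
    and d: "walls_disjoint E rb ra"
    and y: "y \<in> interior U" "fw A (rev ga) (axis sa 1) \<bullet> y = 0" "fw A (rev gb) (axis sb 1) \<bullet> y = 0"
  shows False
proof -
  obtain h j0 j1 where h: "ceq E (h @ [j0] @ rev h) (ga @ [sa] @ rev ga)"
    "ceq E (h @ [j1] @ rev h) (gb @ [sb] @ rev gb)" "j0 = j1 \<or> E j0 j1"
    using A1[OF y] by blast
  have h0: "ceq E (h @ [j0] @ rev h) ra" using ceq_trans[OF h(1) ea] .
  have h1: "ceq E (h @ [j1] @ rev h) rb" using ceq_trans[OF h(2) eb] .
  show False
  proof (cases "j0 = j1")
    case True
    from True h0 have "ceq E (h @ [j1] @ rev h) ra" by simp
    then have "ceq E rb ra" by (rule ceq_trans[OF ceq_sym[OF h1]])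
    then show False using d unfolding walls_disjoint_def by blast
  next
    case False
    then have "E j1 j0" using h(3) Esym by blast
    then have "walls_cross E rb ra" unfolding walls_cross_def edge_in_wall_def
      using False h0 h1 by (intro exI[of _ h] exI[of _ j1] exI[of _ j0]) auto
    then show False using d unfolding walls_disjoint_def by blast
  qed
qed

end


context rc
begin

lemma ceq_cancel_front: "ceq E (rev g @ g @ u) u"
  using ceq_app[OF ceq_rev_cancel[of E g] ceq_refl[of E u]] by simp

lemma main_mid:
  assumes len: "length gs = Suc m" "length ss = m"
    and stp: "\<forall>i<m. ceq E (gs ! Suc i) (gs ! i @ [ss ! i]) \<and> edge_in_wall E (gs ! i) (ss ! i) (rs ! i)"
    and geo: "cox_len E (rev (gs ! 0) @ gs ! m) = m"
    and i: "0 < i" "i < m - 1"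
    and d0: "walls_disjoint E (rs ! i) (rs ! 0)" and d1: "walls_disjoint E (rs ! i) (rs ! (m - 1))"
    and x0: "x \<in> proj_closure (omega_wall A (rs ! 0))"
    and x1: "x \<in> proj_closure (omega_wall A (rs ! (m - 1)))"
  shows "x \<in> proj_closure (omega_wall A (rs ! i))"
proof -
  define l where "l = m - 1"
  have im: "i < m" "l < m" "0 < m" "Suc l = m" using i by (auto simp: l_def)
  define bet where "bet = (\<lambda>k. fw A (rev (gs ! k)) (axis (ss ! k) 1))"
  have edge: "ceq E (gs ! k @ [ss ! k] @ rev (gs ! k)) (rs ! k)" if "k < m" for k
    using stp that unfolding edge_in_wall_def by blast
  have G: "k \<le> m \<Longrightarrow> ceq E (gs ! k) (gs ! 0 @ take k ss)" for k
  proof (induction k)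
    case 0 show ?case by simp
  next
    case (Suc k)
    then have k: "k < m" by simp
    have "ceq E (gs ! Suc k) (gs ! k @ [ss ! k])" using stp k by blast
    also have "ceq E (gs ! k @ [ss ! k]) ((gs ! 0 @ take k ss) @ [ss ! k])"
      using Suc k by (intro ceq_app ceq_refl) simp
    also have "(gs ! 0 @ take k ss) @ [ss ! k] = gs ! 0 @ take (Suc k) ss"
      using k len by (simp add: take_Suc_conv_app_nth)
    finally show ?case .
  qed
  have Gm: "ceq E (gs ! m) (gs ! 0 @ ss)" using G[of m] len by simp
  have "ceq E (rev (gs ! 0) @ gs ! m) (rev (gs ! 0) @ gs ! 0 @ ss)"
    using ceq_app[OF ceq_refl Gm] .
  then have "ceq E (rev (gs ! 0) @ gs ! m) ss" using ceq_cancel_front ceq_trans by blast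
  then have ssl: "cox_len E ss = length ss" using geo len cox_len_ceq by metis
  have T: "cox_len E (take k ss) = length (take k ss)" for k
    using cox_len_split(1)[of "take k ss" "drop k ss"] ssl by simp
  have D: "cox_len E (drop k ss) = length (drop k ss)" for k
    using cox_len_split(2)[of "take k ss" "drop k ss"] ssl by simp
  have zero: "0 \<notin> interior U"
  proof
    assume "0 \<in> interior U"
    then show False by (rule disj_hyp[OF edge[OF im(3)] edge[OF im(1)] d0]) simp_all
  qed
  define c0 where "c0 = (\<chi> k. if k = ss ! 0 then (0::real) else -1)"
  have c0C: "c0 \<in> fund_chamber" by (simp add: c0_def fund_chamber_def)
  define p0 where "p0 = rho_word A (gs ! 0) c0"
  have p0i: "p0 \<in> interior U" unfolding p0_def c0_def by (rule rho_int[OF face_int])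
  have b00: "bet 0 \<bullet> p0 = 0" by (simp add: bet_def p0_def fw_inner c0_def)
  have "bet i \<bullet> p0 = root (rev (gs ! 0) @ gs ! i) (ss ! i) \<bullet> c0"
    by (simp add: bet_def p0_def root_def fw_append fw_inner)
  moreover have "pos (root (rev (gs ! 0) @ gs ! i) (ss ! i))"
  proof (rule tits)
    have a: "ceq E (rev (gs ! 0) @ gs ! i) (take i ss)"
      using ceq_trans[OF ceq_app[OF ceq_refl G] ceq_cancel_front] im by simp
    have b: "ceq E ((rev (gs ! 0) @ gs ! i) @ [ss ! i]) (take (Suc i) ss)"
      using ceq_app[OF a ceq_refl[of E "[ss ! i]"]] im len by (simp add: take_Suc_conv_app_nth)
    show "cox_len E (rev (gs ! 0) @ gs ! i) < cox_len E ((rev (gs ! 0) @ gs ! i) @ [ss ! i])"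
      using cox_len_ceq[OF a] cox_len_ceq[OF b] T[of i] T[of "Suc i"] im len by simp
  qed
  ultimately have bi0: "bet i \<bullet> p0 \<le> 0" using pos_C[OF _ c0C] by simp
  define c1 where "c1 = (\<chi> k. if k = ss ! l then (0::real) else -1)"
  have c1C: "c1 \<in> fund_chamber" by (simp add: c1_def fund_chamber_def)
  define p1 where "p1 = rho_word A (gs ! l) c1"
  have p1i: "p1 \<in> interior U" unfolding p1_def c1_def by (rule rho_int[OF face_int])
  have bll: "bet l \<bullet> p1 = 0" by (simp add: bet_def p1_def fw_inner c1_def)
  have fix1: "rho_gen A (ss ! l) c1 = c1" by (simp add: rho_gen_def c1_def)
  have "rho_word A (gs ! m) = rho_word A (gs ! l @ [ss ! l])"
    using stp im by (metis rho_ceq)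
  then have p1m: "p1 = rho_word A (gs ! m) c1" by (simp add: p1_def rho_word_append fix1)
  have "bet i \<bullet> p1 = root (rev (gs ! m) @ gs ! i) (ss ! i) \<bullet> c1"
    by (simp add: bet_def p1m root_def fw_append fw_inner)
  moreover have "neg (root (rev (gs ! m) @ gs ! i) (ss ! i))"
  proof (rule tits_neg)
    have r1: "ceq E (rev (gs ! m)) (rev ss @ rev (gs ! 0))" using ceq_rev[OF Gm] by simp
    have "ceq E (rev (gs ! m) @ gs ! i) ((rev ss @ rev (gs ! 0)) @ (gs ! 0 @ take i ss))"
      using ceq_app[OF r1 G[of i]] im by simp
    also have "(rev ss @ rev (gs ! 0)) @ (gs ! 0 @ take i ss) = rev ss @ (rev (gs ! 0) @ gs ! 0) @ take i ss"
      by simp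
    also have "ceq E (rev ss @ (rev (gs ! 0) @ gs ! 0) @ take i ss) (rev ss @ [] @ take i ss)"
      by (rule ceq_ctxt[OF ceq_rev_cancel])
    also have "rev ss @ [] @ take i ss = rev (drop i ss) @ (rev (take i ss) @ take i ss) @ []"
      by (metis append_Nil append_Nil2 append_assoc append_take_drop_id rev_append)
    also have "ceq E (rev (drop i ss) @ (rev (take i ss) @ take i ss) @ []) (rev (drop i ss) @ [] @ [])"
      by (rule ceq_ctxt[OF ceq_rev_cancel])
    finally have a: "ceq E (rev (gs ! m) @ gs ! i) (rev (drop i ss))" by simp
    have dr: "drop i ss = ss ! i # drop (Suc i) ss" using im len by (simp add: Cons_nth_drop_Suc)
    have "ceq E ((rev (gs ! m) @ gs ! i) @ [ss ! i]) (rev (drop i ss) @ [ss ! i])"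
      by (rule ceq_app[OF a ceq_refl])
    also have "rev (drop i ss) @ [ss ! i] = rev (drop (Suc i) ss) @ [ss ! i, ss ! i]" using dr by simp
    also have "ceq E (rev (drop (Suc i) ss) @ [ss ! i, ss ! i]) (rev (drop (Suc i) ss))" by (rule ceq_ss)
    finally have b: "ceq E ((rev (gs ! m) @ gs ! i) @ [ss ! i]) (rev (drop (Suc i) ss))" .
    show "cox_len E ((rev (gs ! m) @ gs ! i) @ [ss ! i]) < cox_len E (rev (gs ! m) @ gs ! i)"
      using cox_len_ceq[OF a] cox_len_ceq[OF b] cox_len_rev D[of i] D[of "Suc i"] im len by simp
  qed
  ultimately have bi1: "bet i \<bullet> p1 \<ge> 0" using neg_C[OF _ c1C] by simp
  have wint: "y \<in> interior U" if "y \<in> omega_wall A r" for y r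
    using that unfolding omega_wall_def vinberg_cone_def U_def by simp
  have S0: "bet i \<bullet> y \<le> 0" if y: "y \<in> omega_wall A (rs ! 0)" for y
  proof (rule ccontr)
    assume "\<not> ?thesis"
    then obtain u where u: "0 \<le> u" "u \<le> 1" "bet i \<bullet> ((1 - u) *\<^sub>R p0 + u *\<^sub>R y) = 0"
      using seg_zero[OF bi0, of y] by auto
    have b0y: "bet 0 \<bullet> y = 0" unfolding bet_def by (rule wall_beta[OF edge[OF im(3)] y zero])
    have "bet 0 \<bullet> ((1 - u) *\<^sub>R p0 + u *\<^sub>R y) = 0" using b00 b0y by (simp add: inner_add_right)
    moreover have "(1 - u) *\<^sub>R p0 + u *\<^sub>R y \<in> interior U" using mid_int[OF p0i wint[OF y] u(1,2)] .
    ultimately show False using disj_hyp[OF edge[OF im(3)] edge[OF im(1)] d0] u(3)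
      unfolding bet_def by blast
  qed
  have S1: "bet i \<bullet> y \<ge> 0" if y: "y \<in> omega_wall A (rs ! l)" for y
  proof (rule ccontr)
    assume "\<not> ?thesis"
    then obtain u where u: "0 \<le> u" "u \<le> 1" "bet i \<bullet> ((1 - u) *\<^sub>R y + u *\<^sub>R p1) = 0"
      using seg_zero[OF _ bi1, of y] by auto
    have bly: "bet l \<bullet> y = 0" unfolding bet_def by (rule wall_beta[OF edge[OF im(2)] y zero])
    have "bet l \<bullet> ((1 - u) *\<^sub>R y + u *\<^sub>R p1) = 0" using bll bly by (simp add: inner_add_right)
    moreover have "(1 - u) *\<^sub>R y + u *\<^sub>R p1 \<in> interior U" using mid_int[OF wint[OF y] p1i u(1,2)] .
    ultimately show False using disj_hyp[OF edge[OF im(2)] edge[OF im(1)] d1[folded l_def]] u(3)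
      unfolding bet_def by blast
  qed
  have xc0: "x \<in> closure (omega_wall A (rs ! 0))" and xnz: "x \<noteq> 0"
    using x0 unfolding proj_closure_def by auto
  have xc1: "x \<in> closure (omega_wall A (rs ! l))" using x1 unfolding proj_closure_def l_def by auto
  have "x \<in> closure (omega_wall A (rs ! i))"
    unfolding closure_approachable
  proof (intro allI impI)
    fix e :: real assume e: "e > 0"
    define e' where "e' = min e (norm x)"
    have e': "e' > 0" using e xnz by (simp add: e'_def)
    obtain y where y: "y \<in> omega_wall A (rs ! 0)" "dist y x < e'"
      using xc0 e' unfolding closure_approachable by blast
    obtain z where z: "z \<in> omega_wall A (rs ! l)" "dist z x < e'"
      using xc1 e' unfolding closure_approachable by blast
    obtain u where u: "0 \<le> u" "u \<le> 1" "bet i \<bullet> ((1 - u) *\<^sub>R y + u *\<^sub>R z) = 0"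
      using seg_zero[OF S0[OF y(1)] S1[OF z(1)]] by auto
    define w where "w = (1 - u) *\<^sub>R y + u *\<^sub>R z"
    have wi: "w \<in> interior U" unfolding w_def by (rule mid_int[OF wint[OF y(1)] wint[OF z(1)] u(1,2)])
    have "w \<in> ball x e'" unfolding w_def
      by (rule convexD[OF convex_ball]) (use y z u in \<open>auto simp: dist_commute\<close>)
    then have wd: "dist w x < e'" by (simp add: dist_commute)
    have wnz: "w \<noteq> 0"
    proof
      assume "w = 0"
      then show False using wd by (simp add: e'_def)
    qed
    have "rho_word A (rs ! i) w = w" using rho_refl[OF edge[OF im(1)], of w] u(3)
      by (simp add: w_def[symmetric] bet_def)
    then have "w \<in> omega_wall A (rs ! i)"
      unfolding omega_wall_def vinberg_cone_def using wi wnz unfolding U_def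
      by (auto intro: exI[of _ 1])
    moreover have "dist w x < e" using wd by (simp add: e'_def)
    ultimately show "\<exists>w\<in>omega_wall A (rs ! i). dist w x < e" by blast
  qed
  then show ?thesis unfolding proj_closure_def using xnz by simp
qed

end


theorem lemma5p5:
  fixes E :: "'n::finite \<Rightarrow> 'n \<Rightarrow> bool" and A :: "real^'n^'n" and rs :: "'n list list"
  assumes "racg_graph E"
    and "cartan_racg E A"
    and "efficient_itinerary E rs"
  shows "proj_closure (omega_wall A (hd rs)) \<inter> proj_closure (omega_wall A (last rs))
         = (\<Inter>r\<in>set rs. proj_closure (omega_wall A r))"
proof -
  interpret rc E A using assms(1,2) by unfold_locales
  have it: "itinerary E rs" and eff: "\<forall>i. 0 < i \<and> i < length rs - 1 \<longrightarrow>
        walls_disjoint E (rs ! i) (hd rs) \<and> walls_disjoint E (rs ! i) (last rs)"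
    using assms(3) unfolding efficient_itinerary_def by auto
  have ne: "rs \<noteq> []" using it unfolding itinerary_def by auto
  obtain gs ss where gs: "length gs = Suc (length rs)" "length ss = length rs"
    "\<forall>i < length rs. ceq E (gs ! Suc i) (gs ! i @ [ss ! i]) \<and> edge_in_wall E (gs ! i) (ss ! i) (rs ! i)"
    "cox_len E (rev (gs ! 0) @ gs ! length rs) = length rs"
    using it unfolding itinerary_def by blast
  have hd: "hd rs = rs ! 0" using ne by (simp add: hd_conv_nth)
  have lst: "last rs = rs ! (length rs - 1)" using ne by (simp add: last_conv_nth)
  show ?thesis
  proof
    show "(\<Inter>r\<in>set rs. proj_closure (omega_wall A r)) \<subseteq>
      proj_closure (omega_wall A (hd rs)) \<inter> proj_closure (omega_wall A (last rs))"
      using hd_in_set[OF ne] last_in_set[OF ne] by blast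
  next
    show "proj_closure (omega_wall A (hd rs)) \<inter> proj_closure (omega_wall A (last rs)) \<subseteq>
      (\<Inter>r\<in>set rs. proj_closure (omega_wall A r))"
    proof
      fix x assume x: "x \<in> proj_closure (omega_wall A (hd rs)) \<inter> proj_closure (omega_wall A (last rs))"
      show "x \<in> (\<Inter>r\<in>set rs. proj_closure (omega_wall A r))"
      proof
        fix r assume "r \<in> set rs"
        then obtain i where i: "i < length rs" "r = rs ! i" by (auto simp: in_set_conv_nth)
        show "x \<in> proj_closure (omega_wall A r)"
        proof (cases "i = 0 \<or> i = length rs - 1")
          case True
          then show ?thesis using x i hd lst by auto
        next
          case False
          then have i': "0 < i" "i < length rs - 1" using i by auto
          have d: "walls_disjoint E (rs ! i) (rs ! 0)" "walls_disjoint E (rs ! i) (rs ! (length rs - 1))"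
            using eff i' hd lst by auto
          show ?thesis
            using main_mid[OF gs(1,2,3,4) i' d] x hd lst i by auto
        qed
      qed
    qed
  qed
qed


end
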